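(* In the $\ell^2$ linear social choice setting, the maximum coordinate plurality rule has worst-case distortion $O(d^2)$.
   Context: Setting ($\ell^2$ linear social choice). Fix a dimension $d$. An instance consists of $n$ voters and $m$ candidates, each a vector in $\mathbb{R}^d_{\ge 0}$ with Euclidean norm $1$ (superscripts denote coordinates), with every voter vector in $\mathrm{Cone}(C)$ (nonnegative linear combinations of the candidate vectors $C$). Utility $u_v(c)=v^\top c$; each voter reports a ranking of $C$ consistent with its utilities (ties broken arbitrarily). $\mathrm{UW}(c)=\sum_v u_v(c)$. A rule may use the profile and the candidate vectors but not the voter vectors. Distortion on an instance: $\max_c\mathrm{UW}(c)/\mathrm{UW}(\text{output})$; worst-case distortion is the supremum over instances, as a function of $d$. Maximum coordinate plurality: form $\hat C\subseteq C$ containing, for each $i\in[d]$, one candidate maximizing the coordinate $c^i$ over $C$ (so $|\hat C|\le d$); restrict rankings to $\hat C$ and output a plurality winner (a candidate of $\hat C$ ranked first among $\hat C$ by the most voters, ties arbitrary). *)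

theory Defs
  imports Complex_Main
begin

text \<open>Vectors in R^d are represented as functions nat => real, only coordinates i < d matter.
Voters and candidates are indexed by natural numbers (finite sets V, C).\<close>

definition ip :: "nat \<Rightarrow> (nat \<Rightarrow> real) \<Rightarrow> (nat \<Rightarrow> real) \<Rightarrow> real" where
  "ip d x y = (\<Sum>i<d. x i * y i)"

definition unit_nonneg :: "nat \<Rightarrow> (nat \<Rightarrow> real) \<Rightarrow> bool" where
  "unit_nonneg d x \<longleftrightarrow> (\<forall>i<d. 0 \<le> x i) \<and> sqrt (\<Sum>i<d. (x i)\<^sup>2) = 1"

definition in_cone :: "nat \<Rightarrow> nat set \<Rightarrow> (nat \<Rightarrow> nat \<Rightarrow> real) \<Rightarrow> (nat \<Rightarrow> real) \<Rightarrow> bool" where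
  "in_cone d C cv x \<longleftrightarrow> (\<exists>lam::nat \<Rightarrow> real. (\<forall>c\<in>C. 0 \<le> lam c) \<and>
      (\<forall>i<d. x i = (\<Sum>c\<in>C. lam c * cv c i)))"

definition instance_ok :: "nat \<Rightarrow> nat set \<Rightarrow> nat set \<Rightarrow> (nat \<Rightarrow> nat \<Rightarrow> real) \<Rightarrow> (nat \<Rightarrow> nat \<Rightarrow> real) \<Rightarrow> bool" where
  "instance_ok d V C vv cv \<longleftrightarrow> finite V \<and> V \<noteq> {} \<and> finite C \<and> C \<noteq> {} \<and>
     (\<forall>c\<in>C. unit_nonneg d (cv c)) \<and> (\<forall>v\<in>V. unit_nonneg d (vv v)) \<and>
     (\<forall>v\<in>V. in_cone d C cv (vv v))"

definition utility :: "nat \<Rightarrow> (nat \<Rightarrow> nat \<Rightarrow> real) \<Rightarrow> (nat \<Rightarrow> nat \<Rightarrow> real) \<Rightarrow> nat \<Rightarrow> nat \<Rightarrow> real" where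
  "utility d vv cv v c = ip d (vv v) (cv c)"

definition UW :: "nat \<Rightarrow> nat set \<Rightarrow> (nat \<Rightarrow> nat \<Rightarrow> real) \<Rightarrow> (nat \<Rightarrow> nat \<Rightarrow> real) \<Rightarrow> nat \<Rightarrow> real" where
  "UW d V vv cv c = (\<Sum>v\<in>V. utility d vv cv v c)"

text \<open>A profile: rank v c is the position (0 = top) of candidate c in voter v's ranking;
each ranking is a bijection C -> {0..<|C|}, consistent with utilities (ties broken arbitrarily).\<close>
definition consistent_profile :: "nat \<Rightarrow> nat set \<Rightarrow> nat set \<Rightarrow> (nat \<Rightarrow> nat \<Rightarrow> real) \<Rightarrow> (nat \<Rightarrow> nat \<Rightarrow> real)
      \<Rightarrow> (nat \<Rightarrow> nat \<Rightarrow> nat) \<Rightarrow> bool" where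
  "consistent_profile d V C vv cv rank \<longleftrightarrow>
     (\<forall>v\<in>V. bij_betw (rank v) C {0..<card C} \<and>
        (\<forall>c\<in>C. \<forall>c'\<in>C. utility d vv cv v c > utility d vv cv v c' \<longrightarrow> rank v c < rank v c'))"

definition max_coord_selection :: "nat \<Rightarrow> nat set \<Rightarrow> (nat \<Rightarrow> nat \<Rightarrow> real) \<Rightarrow> (nat \<Rightarrow> nat) \<Rightarrow> bool" where
  "max_coord_selection d C cv sel \<longleftrightarrow>
     (\<forall>i<d. sel i \<in> C \<and> (\<forall>c\<in>C. cv c i \<le> cv (sel i) i))"

definition top_among :: "(nat \<Rightarrow> nat \<Rightarrow> nat) \<Rightarrow> nat set \<Rightarrow> nat \<Rightarrow> nat \<Rightarrow> bool" where
  "top_among rank S v c \<longleftrightarrow> c \<in> S \<and> (\<forall>c'\<in>S. rank v c \<le> rank v c')"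

definition plurality_score :: "nat set \<Rightarrow> (nat \<Rightarrow> nat \<Rightarrow> nat) \<Rightarrow> nat set \<Rightarrow> nat \<Rightarrow> nat" where
  "plurality_score V rank S c = card {v\<in>V. top_among rank S v c}"

definition plurality_winner :: "nat set \<Rightarrow> (nat \<Rightarrow> nat \<Rightarrow> nat) \<Rightarrow> nat set \<Rightarrow> nat \<Rightarrow> bool" where
  "plurality_winner V rank S w \<longleftrightarrow> w \<in> S \<and>
     (\<forall>c\<in>S. plurality_score V rank S c \<le> plurality_score V rank S w)"

text \<open>w is a possible output of maximum coordinate plurality (for some choice of hat C and ties).\<close>
definition max_coord_plurality_output :: "nat \<Rightarrow> nat set \<Rightarrow> nat set \<Rightarrow> (nat \<Rightarrow> nat \<Rightarrow> real)
      \<Rightarrow> (nat \<Rightarrow> nat \<Rightarrow> nat) \<Rightarrow> (nat \<Rightarrow> nat) \<Rightarrow> nat \<Rightarrow> bool" where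
  "max_coord_plurality_output d V C cv rank sel w \<longleftrightarrow>
     max_coord_selection d C cv sel \<and> plurality_winner V rank (sel ` {..<d}) w"

end

theory Submission
  imports Defs
begin

lemma unit_sum: "unit_nonneg d x \<Longrightarrow> (\<Sum>i<d. (x i)\<^sup>2) = 1"
  unfolding unit_nonneg_def by simp

lemma ip_le1:
  assumes "unit_nonneg d x" "unit_nonneg d y"
  shows "ip d x y \<le> 1"
proof -
  have "ip d x y \<le> (\<Sum>i<d. ((x i)\<^sup>2 + (y i)\<^sup>2) / 2)"
    unfolding ip_def
  proof (rule sum_mono)
    fix i show "x i * y i \<le> ((x i)\<^sup>2 + (y i)\<^sup>2) / 2"
      using sum_squares_bound[of "x i" "y i"] by (simp add: power2_eq_square)
  qed
  also have "\<dots> = ((\<Sum>i<d. (x i)\<^sup>2) + (\<Sum>i<d. (y i)\<^sup>2)) / 2"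
    by (simp add: sum.distrib sum_divide_distrib[symmetric])
  also have "\<dots> = 1" using unit_sum[OF assms(1)] unit_sum[OF assms(2)] by simp
  finally show ?thesis .
qed

lemma ip_nonneg:
  assumes "unit_nonneg d x" "unit_nonneg d y"
  shows "0 \<le> ip d x y"
  using assms unfolding ip_def unit_nonneg_def by (auto intro!: sum_nonneg)

lemma key:
  assumes C: "finite C" and cu: "\<forall>c\<in>C. unit_nonneg d (cv c)"
    and vu: "unit_nonneg d x" and cone: "in_cone d C cv x"
    and sel: "max_coord_selection d C cv sel"
  shows "1 \<le> (\<Sum>i<d. cv (sel i) i * x i)"
proof -
  define M where "M = (\<Sum>i<d. cv (sel i) i * x i)"
  obtain lam where lp: "\<forall>c\<in>C. 0 \<le> lam c" and lx: "\<forall>i<d. x i = (\<Sum>c\<in>C. lam c * cv c i)"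
    using cone unfolding in_cone_def by blast
  define L where "L = (\<Sum>c\<in>C. lam c)"
  have mx: "\<And>i c. i < d \<Longrightarrow> c \<in> C \<Longrightarrow> cv c i \<le> cv (sel i) i"
    using sel unfolding max_coord_selection_def by blast
  have cnn: "\<And>i c. i < d \<Longrightarrow> c \<in> C \<Longrightarrow> 0 \<le> cv c i"
    using cu unfolding unit_nonneg_def by blast
  have xnn: "\<And>i. i < d \<Longrightarrow> 0 \<le> x i" using vu unfolding unit_nonneg_def by blast
  have "M = (\<Sum>i<d. cv (sel i) i * (\<Sum>c\<in>C. lam c * cv c i))"
    unfolding M_def using lx by (auto intro!: sum.cong)
  also have "\<dots> = (\<Sum>c\<in>C. lam c * (\<Sum>i<d. cv (sel i) i * cv c i))"
    by (simp add: sum_distrib_left sum_distrib_right mult_ac sum.swap[of _ C])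
  also have "\<dots> \<ge> (\<Sum>c\<in>C. lam c * (\<Sum>i<d. (cv c i)\<^sup>2))"
  proof (rule sum_mono)
    fix c assume c: "c \<in> C"
    have "(\<Sum>i<d. (cv c i)\<^sup>2) \<le> (\<Sum>i<d. cv (sel i) i * cv c i)"
      by (rule sum_mono) (use mx cnn c in \<open>auto simp: power2_eq_square intro: mult_right_mono\<close>)
    then show "lam c * (\<Sum>i<d. (cv c i)\<^sup>2) \<le> lam c * (\<Sum>i<d. cv (sel i) i * cv c i)"
      using lp c by (simp add: mult_left_mono)
  qed
  finally have hML: "L \<le> M" unfolding L_def using unit_sum cu by simp
  have "1 = (\<Sum>i<d. x i * (\<Sum>c\<in>C. lam c * cv c i))"
    using unit_sum[OF vu] lx by (auto simp: power2_eq_square intro!: sum.cong)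
  also have "\<dots> = (\<Sum>c\<in>C. lam c * (\<Sum>i<d. x i * cv c i))"
    by (simp add: sum_distrib_left sum_distrib_right mult_ac sum.swap[of _ C])
  also have "\<dots> \<le> (\<Sum>c\<in>C. lam c * M)"
  proof (rule sum_mono)
    fix c assume c: "c \<in> C"
    have "(\<Sum>i<d. x i * cv c i) \<le> M" unfolding M_def
    proof (rule sum_mono)
      fix i assume "i \<in> {..<d}"
      then have "x i * cv c i \<le> x i * cv (sel i) i" using mx xnn c by (simp add: mult_left_mono)
      then show "x i * cv c i \<le> cv (sel i) i * x i" by (simp add: mult.commute)
    qed
    then show "lam c * (\<Sum>i<d. x i * cv c i) \<le> lam c * M"
      using lp c by (simp add: mult_left_mono)
  qed
  also have "\<dots> = L * M" unfolding L_def by (simp add: sum_distrib_right)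
  finally have "1 \<le> L * M" .
  moreover have "0 \<le> L" unfolding L_def using lp by (simp add: sum_nonneg)
  ultimately have M0: "0 \<le> M" using hML by linarith
  have "L * M \<le> M * M" using hML M0 by (rule mult_right_mono)
  then have MM: "1 \<le> M * M" using \<open>1 \<le> L * M\<close> by linarith
  have "1 \<le> M"
  proof (rule ccontr)
    assume "\<not> 1 \<le> M"
    then have "M * M \<le> M * 1" using M0 by (intro mult_left_mono) auto
    then show False using MM \<open>\<not> 1 \<le> M\<close> by linarith
  qed
  then show ?thesis unfolding M_def .
qed

theorem theorem14:
  shows "\<exists>K::real. \<forall>d::nat. \<forall>V C vv cv rank sel w.
     instance_ok d V C vv cv \<and> consistent_profile d V C vv cv rank \<and>
     max_coord_plurality_output d V C cv rank sel w \<longrightarrow>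
     (\<forall>c\<in>C. UW d V vv cv c \<le> K * (real d)\<^sup>2 * UW d V vv cv w)"
proof (intro exI[of _ 1] allI impI ballI)
  fix d V C vv cv rank sel w c
  assume H: "instance_ok d V C vv cv \<and> consistent_profile d V C vv cv rank \<and>
     max_coord_plurality_output d V C cv rank sel w"
  assume cC: "c \<in> C"
  have fV: "finite V" and fC: "finite C" and Vne: "V \<noteq> {}"
    and cu: "\<forall>c\<in>C. unit_nonneg d (cv c)" and vu: "\<forall>v\<in>V. unit_nonneg d (vv v)"
    and vc: "\<forall>v\<in>V. in_cone d C cv (vv v)"
    using H unfolding instance_ok_def by auto
  have cons: "\<forall>v\<in>V. bij_betw (rank v) C {0..<card C} \<and>
        (\<forall>c\<in>C. \<forall>c'\<in>C. utility d vv cv v c > utility d vv cv v c' \<longrightarrow> rank v c < rank v c')"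
    using H unfolding consistent_profile_def by auto
  have sel: "max_coord_selection d C cv sel" and pw: "plurality_winner V rank (sel ` {..<d}) w"
    using H unfolding max_coord_plurality_output_def by auto
  define S where "S = sel ` {..<d}"
  have SC: "S \<subseteq> C" using sel unfolding S_def max_coord_selection_def by auto
  have wS: "w \<in> S" using pw unfolding plurality_winner_def S_def by auto
  then have wC: "w \<in> C" using SC by auto
  have dpos: "d \<ge> 1" using wS unfolding S_def by auto
  have fS: "finite S" unfolding S_def by auto
  have cardS: "card S \<le> d" unfolding S_def using card_image_le[of "{..<d}" sel] by simp
  have cover: "V \<subseteq> (\<Union>s\<in>S. {v\<in>V. top_among rank S v s})"
  proof
    fix v assume v: "v \<in> V"
    obtain s where "s \<in> S" "\<forall>s'\<in>S. rank v s \<le> rank v s'"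
      using ex_has_least_nat[of "\<lambda>s. s \<in> S" w "rank v"] wS by blast
    then show "v \<in> (\<Union>s\<in>S. {v\<in>V. top_among rank S v s})"
      using v unfolding top_among_def by auto
  qed
  have "card V \<le> (\<Sum>s\<in>S. card {v\<in>V. top_among rank S v s})"
  proof -
    have "finite (\<Union>s\<in>S. {v\<in>V. top_among rank S v s})" using fS fV by auto
    then have "card V \<le> card (\<Union>s\<in>S. {v\<in>V. top_among rank S v s})"
      using card_mono cover by blast
    also have "\<dots> \<le> (\<Sum>s\<in>S. card {v\<in>V. top_among rank S v s})"
      by (rule card_UN_le[OF fS])
    finally show ?thesis .
  qed
  also have "\<dots> \<le> (\<Sum>s\<in>S. plurality_score V rank S w)"
    by (rule sum_mono) (use pw in \<open>auto simp: plurality_winner_def plurality_score_def S_def\<close>)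
  also have "\<dots> \<le> d * plurality_score V rank S w" using cardS by (simp add: mult_right_mono)
  finally have cV: "real (card V) \<le> real d * real (card {v\<in>V. top_among rank S v w})"
    unfolding plurality_score_def by (metis of_nat_le_iff of_nat_mult)
  have supp: "1 \<le> real d * utility d vv cv v w" if v: "v \<in> V" "top_among rank S v w" for v
  proof -
    have "1 \<le> (\<Sum>i<d. cv (sel i) i * vv v i)"
      using key[OF fC cu _ _ sel] vu vc v by auto
    also have "\<dots> \<le> (\<Sum>i<d. utility d vv cv v w)"
    proof (rule sum_mono)
      fix i assume i: "i \<in> {..<d}"
      have siC: "sel i \<in> C" using i SC unfolding S_def by auto
      have "cv (sel i) i * vv v i = vv v i * cv (sel i) i" by simp
      also have "\<dots> \<le> ip d (vv v) (cv (sel i))" unfolding ip_def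
        by (rule member_le_sum) (use i vu cu siC v in \<open>auto simp: unit_nonneg_def\<close>)
      also have "\<dots> \<le> utility d vv cv v w"
      proof (rule ccontr)
        assume "\<not> ?thesis"
        then have "rank v (sel i) < rank v w" using cons v siC wC unfolding utility_def by auto
        moreover have "sel i \<in> S" using i unfolding S_def by auto
        ultimately show False using v(2) unfolding top_among_def by force
      qed
      finally show "cv (sel i) i * vv v i \<le> utility d vv cv v w" .
    qed
    finally show ?thesis by simp
  qed
  have unn: "\<And>v x. v \<in> V \<Longrightarrow> x \<in> C \<Longrightarrow> 0 \<le> utility d vv cv v x"
    using ip_nonneg vu cu unfolding utility_def by blast
  have "real (card V) \<le> real d * (\<Sum>v\<in>{v\<in>V. top_among rank S v w}. 1)" using cV by simp
  also have "\<dots> \<le> real d * (\<Sum>v\<in>{v\<in>V. top_among rank S v w}. real d * utility d vv cv v w)"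
    using supp dpos by (intro mult_left_mono sum_mono) auto
  also have "\<dots> = (real d)\<^sup>2 * (\<Sum>v\<in>{v\<in>V. top_among rank S v w}. utility d vv cv v w)"
    by (simp add: sum_distrib_left power2_eq_square mult.assoc)
  also have "\<dots> \<le> (real d)\<^sup>2 * UW d V vv cv w"
    unfolding UW_def using fV unn wC
    by (intro mult_left_mono sum_mono2) auto
  finally have A: "real (card V) \<le> (real d)\<^sup>2 * UW d V vv cv w" .
  have "UW d V vv cv c \<le> (\<Sum>v\<in>V. 1)"
    unfolding UW_def utility_def using ip_le1 vu cu cC by (intro sum_mono) auto
  then show "UW d V vv cv c \<le> 1 * (real d)\<^sup>2 * UW d V vv cv w" using A by simp
qed

end
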